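(* Assume the predecessor sets are consecutive, i.e. $\pi_C(j)=\{j-I_j,\dots,j-1\}$ for all $j$, so that $\psi_C(j)=\{1,\dots,C\}$ for $j\le C$ and $\psi_C(j)=\{j-C+1,\dots,j\}$ for $j\ge C$. Then for every $j\in\{1,\dots,J\}$ the principal submatrices indexed by the blocks $\psi_C(j)$ coincide: $$\big(\mathbf S_C^{-1}\big)_{[\psi_C(j),\psi_C(j)]}=\big(\mathbf K_{\mathbf A\mathbf A}\big)_{[\psi_C(j),\psi_C(j)]},$$ so that the block band-diagonals $-C+1,\dots,C-1$ of $\mathbf S_C^{-1}$ and $\mathbf K_{\mathbf A\mathbf A}$ agree. In particular, for $C=J$, $\mathbf S_J^{-1}=\mathbf K_{\mathbf A\mathbf A}$.
   Context: Let $k:\mathbb R^D\times\mathbb R^D\to\mathbb R$ be a positive definite kernel. For matrices $\mathbf U\in\mathbb R^{m\times D}$, $\mathbf W\in\mathbb R^{n\times D}$ whose rows are points of $\mathbb R^D$, $\mathbf K_{\mathbf U\mathbf W}\in\mathbb R^{m\times n}$ has entries $k(U_i,W_l)$. All kernel matrices that are inverted below are assumed invertible. Inducing inputs: fix $J\ge1$, $L\ge1$, $\mathbf A_j\in\mathbb R^{L\times D}$, $\mathbf A=(\mathbf A_1;\dots;\mathbf A_J)$, $M=LJ$. For $\varphi\subseteq\{1,\dots,J\}$ listed increasingly as $\varphi^1<\varphi^2<\cdots$, $\mathbf A_\varphi$ denotes the vertical stack of the corresponding blocks; for an $M\times M$ matrix $\mathbf Z$ viewed as $J\times J$ blocks of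 size $L\times L$, $\mathbf Z_{[\varphi,\varphi]}$ is the submatrix of block rows and columns in $\varphi$. Predecessor and correlation sets: for each $C\in\{1,\dots,J\}$ and $j\in\{1,\dots,J\}$ a set $\pi_C(j)\subseteq\{1,\dots,j-1\}$ with $|\pi_C(j)|=I_j:=\min(j-1,C-1)$; the correlation set is $\psi_C(j)=\pi_C(j)\cup\{j,\dots,C\}$ if $j<C$ and $\psi_C(j)=\pi_C(j)\cup\{j\}$ if $j\ge C$. Write $\pi(j)=\pi_C(j)$ when $C$ is fixed. Matrices (for fixed $C$): $\mathbf F_j=\mathbf K_{\mathbf A_j\mathbf A_{\pi(j)}}\mathbf K_{\mathbf A_{\pi(j)}\mathbf A_{\pi(j)}}^{-1}\in\mathbb R^{L\times LI_j}$; $\mathbf Q_j=\mathbf K_{\mathbf A_j\mathbf A_j}-\mathbf K_{\mathbf A_j\mathbf A_{\pi(j)}}\mathbf K_{\mathbf A_{\pi(j)}\mathbf A_{\pi(j)}}^{-1}\mathbf K_{\mathbf A_{\pi(j)}\mathbf A_j}$; if $\pi(j)=\emptyset$ then $\mathbf F_j$ is empty and $\mathbf Q_j=\mathbf K_{\mathbf A_j\mathbf A_j}$. Partition $\mathbf F_j=[\mathbf F_j^1,\dots,\mathbf F_j^{I_j}]$ into $L\times L$ blocks, $\mathbf F_j^i$ corresponding to $\pi^i(j)$. $\mathbf Q=\mathrm{blockdiag}(\mathbf Q_1,\dots,\mathbf Q_J)$; $\mathbf F\in\mathbb R^{M\times M}$ is the $J\times J$ block matrix with $\mathbb I_L$ in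 each diagonal block, $-\mathbf F_j^i$ in block $(j,\pi^i(j))$ and zero elsewhere; $\mathbf S_C=\mathbf F^T\mathbf Q^{-1}\mathbf F$ (the precision matrix of the CPoE prior $q_C(\mathbf a)=\prod_j\mathcal N(\mathbf a_j;\mathbf F_j\mathbf a_{\pi(j)},\mathbf Q_j)$). *)

theory Defs
  imports "HOL-Analysis.Analysis" "Jordan_Normal_Form.Matrix"
begin

text \<open>Inducing inputs are given as a row function A :: nat => real^'d,
  row r (0-based) of the M x D matrix, M = L*J. Block j (1-based, 1 <= j <= J) consists of
  rows (j-1)*L ..< j*L.\<close>

definition pos_def_kernel :: "('a \<Rightarrow> 'a \<Rightarrow> real) \<Rightarrow> bool" where
  "pos_def_kernel k \<longleftrightarrow> (\<forall>x y. k x y = k y x) \<and>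
     (\<forall>(xs :: 'a list) (c :: nat \<Rightarrow> real).
        (\<Sum>i<length xs. \<Sum>l<length xs. c i * c l * k (xs ! i) (xs ! l)) \<ge> 0)"

definition minv :: "real mat \<Rightarrow> real mat" where
  "minv X = (SOME Y. inverts_mat X Y \<and> inverts_mat Y X)"

definition blockrows :: "nat \<Rightarrow> nat set \<Rightarrow> nat list" where
  "blockrows L \<phi> = concat (map (\<lambda>j. [(j - 1) * L ..< j * L]) (sorted_list_of_set \<phi>))"

definition kmat :: "('a \<Rightarrow> 'a \<Rightarrow> real) \<Rightarrow> (nat \<Rightarrow> 'a) \<Rightarrow> nat list \<Rightarrow> nat list \<Rightarrow> real mat" where
  "kmat k A us ws = mat (length us) (length ws) (\<lambda>(a, b). k (A (us ! a)) (A (ws ! b)))"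

definition Kblk :: "('a \<Rightarrow> 'a \<Rightarrow> real) \<Rightarrow> (nat \<Rightarrow> 'a) \<Rightarrow> nat \<Rightarrow> nat set \<Rightarrow> nat set \<Rightarrow> real mat" where
  "Kblk k A L \<phi> \<theta> = kmat k A (blockrows L \<phi>) (blockrows L \<theta>)"

definition KAA :: "('a \<Rightarrow> 'a \<Rightarrow> real) \<Rightarrow> (nat \<Rightarrow> 'a) \<Rightarrow> nat \<Rightarrow> nat \<Rightarrow> real mat" where
  "KAA k A L J = Kblk k A L {1..J} {1..J}"

definition subblk :: "nat \<Rightarrow> nat set \<Rightarrow> real mat \<Rightarrow> real mat" where
  "subblk L \<phi> Z = (let idx = blockrows L \<phi> in
     mat (length idx) (length idx) (\<lambda>(a, b). Z $$ (idx ! a, idx ! b)))"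

definition Fj :: "('a \<Rightarrow> 'a \<Rightarrow> real) \<Rightarrow> (nat \<Rightarrow> 'a) \<Rightarrow> nat \<Rightarrow> (nat \<Rightarrow> nat set) \<Rightarrow> nat \<Rightarrow> real mat" where
  "Fj k A L \<pi> j = Kblk k A L {j} (\<pi> j) * minv (Kblk k A L (\<pi> j) (\<pi> j))"

definition Qj :: "('a \<Rightarrow> 'a \<Rightarrow> real) \<Rightarrow> (nat \<Rightarrow> 'a) \<Rightarrow> nat \<Rightarrow> (nat \<Rightarrow> nat set) \<Rightarrow> nat \<Rightarrow> real mat" where
  "Qj k A L \<pi> j = Kblk k A L {j} {j}
     - Kblk k A L {j} (\<pi> j) * minv (Kblk k A L (\<pi> j) (\<pi> j)) * Kblk k A L (\<pi> j) {j}"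

definition Qmat :: "('a \<Rightarrow> 'a \<Rightarrow> real) \<Rightarrow> (nat \<Rightarrow> 'a) \<Rightarrow> nat \<Rightarrow> nat \<Rightarrow> (nat \<Rightarrow> nat set) \<Rightarrow> real mat" where
  "Qmat k A L J \<pi> = mat (L * J) (L * J) (\<lambda>(r, c).
     if r div L = c div L then Qj k A L \<pi> (r div L + 1) $$ (r mod L, c mod L) else 0)"

text \<open>F: identity diagonal blocks, -F_j^i in block (j, pi^i(j)), where pi^i(j) is the
  i-th smallest element of pi(j); the 0-based position of block b in pi(j) is
  card {i in pi(j). i < b}.\<close>
definition Fmat :: "('a \<Rightarrow> 'a \<Rightarrow> real) \<Rightarrow> (nat \<Rightarrow> 'a) \<Rightarrow> nat \<Rightarrow> nat \<Rightarrow> (nat \<Rightarrow> nat set) \<Rightarrow> real mat" where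
  "Fmat k A L J \<pi> = mat (L * J) (L * J) (\<lambda>(r, c).
     (let jr = r div L + 1; jc = c div L + 1 in
      if jr = jc then (if r = c then 1 else 0)
      else if jc \<in> \<pi> jr then
        - (Fj k A L \<pi> jr $$ (r mod L, card {i \<in> \<pi> jr. i < jc} * L + c mod L))
      else 0))"

definition Smat :: "('a \<Rightarrow> 'a \<Rightarrow> real) \<Rightarrow> (nat \<Rightarrow> 'a) \<Rightarrow> nat \<Rightarrow> nat \<Rightarrow> (nat \<Rightarrow> nat set) \<Rightarrow> real mat" where
  "Smat k A L J \<pi> = transpose_mat (Fmat k A L J \<pi>) * minv (Qmat k A L J \<pi>) * Fmat k A L J \<pi>"

definition Ij :: "nat \<Rightarrow> nat \<Rightarrow> nat" where
  "Ij C j = min (j - 1) (C - 1)"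

definition pi_consec :: "nat \<Rightarrow> nat \<Rightarrow> nat set" where
  "pi_consec C j = {j - Ij C j ..< j}"

definition psi :: "nat \<Rightarrow> (nat \<Rightarrow> nat set) \<Rightarrow> nat \<Rightarrow> nat set" where
  "psi C \<pi> j = (if j < C then \<pi> j \<union> {j..C} else \<pi> j \<union> {j})"

end

theory Submission
  imports Defs "Jordan_Normal_Form.Determinant"
begin


lemma mult_entry:
  fixes X Y :: "real mat"
  assumes "X \<in> carrier_mat a b" "Y \<in> carrier_mat b c" "i < a" "j < c"
  shows "(X * Y) $$ (i,j) = (\<Sum>s<b. X $$ (i,s) * Y $$ (s,j))"
  using assms by (auto simp: scalar_prod_def lessThan_atLeast0 intro!: sum.cong)

lemma minv_inv:
  fixes X :: "real mat"
  assumes X: "X \<in> carrier_mat N N" and inv: "invertible_mat X"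
  shows "minv X \<in> carrier_mat N N \<and> X * minv X = 1\<^sub>m N \<and> minv X * X = 1\<^sub>m N"
proof -
  have ex: "\<exists>Y. inverts_mat X Y \<and> inverts_mat Y X" using inv unfolding invertible_mat_def by blast
  have "inverts_mat X (minv X) \<and> inverts_mat (minv X) X"
    unfolding minv_def by (rule someI_ex[OF ex])
  hence 1: "X * minv X = 1\<^sub>m N" and 2: "minv X * X = 1\<^sub>m (dim_row (minv X))"
    using X unfolding inverts_mat_def by auto
  have c: "dim_col (minv X) = N" using arg_cong[OF 1, of dim_col] X by simp
  have r: "dim_row (minv X) = N" using arg_cong[OF 2, of dim_col] X by simp
  have 3: "minv X * X = 1\<^sub>m N" using 2 unfolding r .
  have 4: "minv X \<in> carrier_mat N N" unfolding carrier_mat_def using c r by blast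
  show ?thesis using 1 3 4 by blast
qed

lemma blockrows_ivl:
  assumes "1 \<le> a" "a \<le> b"
  shows "blockrows L {a..<b} = [(a-1)*L..<(b-1)*L]"
  using assms(2)
proof (induction b rule: dec_induct)
  case base
  then show ?case by (simp add: blockrows_def)
next
  case (step b)
  have "blockrows L {a..<Suc b} = blockrows L {a..<b} @ [(b-1)*L..<b*L]"
    using step.hyps by (simp add: blockrows_def)
  also have "\<dots> = [(a-1)*L..<(b-1)*L] @ [(b-1)*L..<b*L]" using step.IH by simp
  also have "\<dots> = [(a-1)*L..<b*L]"
  proof -
    have le: "(a-1)*L \<le> (b-1)*L" using step.hyps by (intro mult_le_mono1 diff_le_mono) simp
    have "b*L = (b-1)*L + L" using assms step.hyps by (cases b) auto
    then show ?thesis using upt_add_eq_append[OF le, of L] by simp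
  qed
  finally show ?case by simp
qed

lemma blk_iff:
  fixes q r L :: nat
  assumes "0 < L"
  shows "(q*L \<le> r \<and> r < (q+1)*L) \<longleftrightarrow> r div L = q"
proof -
  have "r div L = q \<longleftrightarrow> q \<le> r div L \<and> r div L < q+1" by auto
  then show ?thesis using less_eq_div_iff_mult_less_eq[OF assms, of q r]
      div_less_iff_less_mult[OF assms, of r "q+1"] by auto
qed

lemma set_blockrows:
  assumes "finite \<phi>" "0 \<notin> \<phi>" "L \<ge> 1"
  shows "r \<in> set (blockrows L \<phi>) \<longleftrightarrow> r div L + 1 \<in> \<phi>"
proof -
  have "r \<in> set (blockrows L \<phi>) \<longleftrightarrow> (\<exists>j\<in>\<phi>. (j-1)*L \<le> r \<and> r < j*L)"
    using assms by (auto simp: blockrows_def)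
  also have "\<dots> \<longleftrightarrow> (\<exists>j\<in>\<phi>. r div L = j - 1)"
  proof -
    have "(j-1)*L \<le> r \<and> r < j*L \<longleftrightarrow> r div L = j - 1" if "j \<in> \<phi>" for j
    proof -
      have j: "j - 1 + 1 = j" using that assms by (cases j) auto
      show ?thesis using blk_iff[of L "j-1" r] assms(3) j by simp
    qed
    then show ?thesis by blast
  qed
  also have "\<dots> \<longleftrightarrow> r div L + 1 \<in> \<phi>"
  proof
    assume "\<exists>j\<in>\<phi>. r div L = j - 1"
    then obtain j where "j \<in> \<phi>" "r div L = j - 1" by blast
    moreover have "j \<noteq> 0" using calculation(1) assms(2) by (cases j) auto
    ultimately show "r div L + 1 \<in> \<phi>" by simp
  next
    assume "r div L + 1 \<in> \<phi>" then show "\<exists>j\<in>\<phi>. r div L = j - 1" by force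
  qed
  finally show ?thesis .
qed

lemma Kblk_ivl:
  assumes "1 \<le> a" "a \<le> b" "1 \<le> c" "c \<le> d"
  shows "Kblk k A L {a..<b} {c..<d} = mat ((b-a)*L) ((d-c)*L)
           (\<lambda>(i,j). k (A ((a-1)*L + i)) (A ((c-1)*L + j)))"
proof -
  have l1: "(b-1)*L - (a-1)*L = (b-a)*L" using assms by (simp add: diff_mult_distrib)
  have l2: "(d-1)*L - (c-1)*L = (d-c)*L" using assms by (simp add: diff_mult_distrib)
  have len1: "length [(a-1)*L..<(b-1)*L] = (b-a)*L" by (simp only: length_upt l1)
  have len2: "length [(c-1)*L..<(d-1)*L] = (d-c)*L" by (simp only: length_upt l2)
  have n1: "[(a-1)*L..<(b-1)*L] ! i = (a-1)*L + i" if "i < (b-a)*L" for i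
    using that l1 by (intro nth_upt) linarith
  have n2: "[(c-1)*L..<(d-1)*L] ! j = (c-1)*L + j" if "j < (d-c)*L" for j
    using that l2 by (intro nth_upt) linarith
  show ?thesis unfolding Kblk_def blockrows_ivl[OF assms(1,2)] blockrows_ivl[OF assms(3,4)]
  proof (rule eq_matI)
    fix i j assume ij: "i < dim_row (mat ((b-a)*L) ((d-c)*L)
           (\<lambda>(i,j). k (A ((a-1)*L + i)) (A ((c-1)*L + j))))"
       "j < dim_col (mat ((b-a)*L) ((d-c)*L)
           (\<lambda>(i,j). k (A ((a-1)*L + i)) (A ((c-1)*L + j))))"
    then have "i < (b-a)*L" "j < (d-c)*L" by simp_all
    then show "kmat k A [(a-1)*L..<(b-1)*L] [(c-1)*L..<(d-1)*L] $$ (i,j) = mat ((b-a)*L) ((d-c)*L)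
           (\<lambda>(i,j). k (A ((a-1)*L + i)) (A ((c-1)*L + j))) $$ (i,j)"
      unfolding kmat_def len1 len2 using n1 n2 by simp
  qed (unfold kmat_def len1 len2, simp_all)
qed



locale cp =
  fixes k :: "'a \<Rightarrow> 'a \<Rightarrow> real" and A :: "nat \<Rightarrow> 'a" and J L C :: nat
  assumes ksym: "\<And>x y. k x y = k y x"
    and J: "J \<ge> 1" and L: "L \<ge> 1" and C1: "1 \<le> C" and CJ: "C \<le> J"
    and invK: "\<And>j. j \<in> {1..J} \<Longrightarrow> pi_consec C j \<noteq> {} \<Longrightarrow>
                 invertible_mat (Kblk k A L (pi_consec C j) (pi_consec C j))"
    and invQ: "\<And>j. j \<in> {1..J} \<Longrightarrow> invertible_mat (Qj k A L (pi_consec C) j)"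
begin

definition lo :: "nat \<Rightarrow> nat" where "lo a = (a - Ij C a - 1) * L"
definition m :: "nat \<Rightarrow> nat" where "m a = Ij C a * L"

lemma Ij_le: "Ij C a \<le> a - 1" unfolding Ij_def by simp

lemma pc_ivl: "pi_consec C a = {a - Ij C a ..< a}" unfolding pi_consec_def by simp

lemma lo_m: "lo a + m a = (a - 1) * L"
proof -
  have "a - Ij C a - 1 + Ij C a = a - 1" using Ij_le[of a] by simp
  then show ?thesis unfolding lo_def m_def by (metis add_mult_distrib)
qed

lemma lo_eq: "lo a = (a - 1 - Ij C a) * L" unfolding lo_def by simp

lemma Kblk_gen:
  assumes "1 \<le> a"
  shows "Kblk k A L {a} (pi_consec C a) = mat L (m a) (\<lambda>(i,j). k (A ((a-1)*L + i)) (A (lo a + j)))"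
    and "Kblk k A L (pi_consec C a) (pi_consec C a) = mat (m a) (m a) (\<lambda>(i,j). k (A (lo a + i)) (A (lo a + j)))"
    and "Kblk k A L (pi_consec C a) {a} = mat (m a) L (\<lambda>(i,j). k (A (lo a + i)) (A ((a-1)*L + j)))"
    and "Kblk k A L {a} {a} = mat L L (\<lambda>(i,j). k (A ((a-1)*L + i)) (A ((a-1)*L + j)))"
proof -
  have s: "{a} = {a..<a+1}" by auto
  have p: "pi_consec C a = {a - Ij C a ..< a}" by (rule pc_ivl)
  have i1: "1 \<le> a - Ij C a" using Ij_le[of a] assms by simp
  have i2: "a - Ij C a \<le> a" by simp
  have d: "a - (a - Ij C a) = Ij C a" using Ij_le[of a] assms by simp
  have l: "(a - Ij C a - 1) * L = lo a" unfolding lo_def by simp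
  have a1: "a \<le> a + 1" by simp
  show "Kblk k A L {a} (pi_consec C a) = mat L (m a) (\<lambda>(i,j). k (A ((a-1)*L + i)) (A (lo a + j)))"
    unfolding s p Kblk_ivl[OF assms a1 i1 i2] d l m_def by simp
  show "Kblk k A L (pi_consec C a) (pi_consec C a) = mat (m a) (m a) (\<lambda>(i,j). k (A (lo a + i)) (A (lo a + j)))"
    unfolding p Kblk_ivl[OF i1 i2 i1 i2] d l m_def by simp
  show "Kblk k A L (pi_consec C a) {a} = mat (m a) L (\<lambda>(i,j). k (A (lo a + i)) (A ((a-1)*L + j)))"
    unfolding s p Kblk_ivl[OF i1 i2 assms a1] d l m_def by simp
  show "Kblk k A L {a} {a} = mat L L (\<lambda>(i,j). k (A ((a-1)*L + i)) (A ((a-1)*L + j)))"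
    unfolding s Kblk_ivl[OF assms a1 assms a1] by simp
qed

abbreviation "KaP a \<equiv> Kblk k A L {a} (pi_consec C a)"
abbreviation "KPP a \<equiv> Kblk k A L (pi_consec C a) (pi_consec C a)"
abbreviation "KPa a \<equiv> Kblk k A L (pi_consec C a) {a}"
abbreviation "Kaa a \<equiv> Kblk k A L {a} {a}"
abbreviation "FF a \<equiv> Fj k A L (pi_consec C) a"
abbreviation "QQ a \<equiv> Qj k A L (pi_consec C) a"

lemma KPP_inv:
  assumes a: "a \<in> {1..J}"
  shows "invertible_mat (KPP a)"
proof (cases "pi_consec C a = {}")
  case False then show ?thesis using invK[OF a] by blast
next
  case True
  then have "Ij C a = 0" unfolding pc_ivl using Ij_le[of a] a by auto
  then have m0: "m a = 0" unfolding m_def by simp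
  have c: "KPP a \<in> carrier_mat 0 0" using Kblk_gen(2)[of a] a m0 by simp
  have "KPP a * KPP a = 1\<^sub>m 0" by (rule eq_matI) (use c in auto)
  then show ?thesis unfolding invertible_mat_def inverts_mat_def square_mat.simps using c by auto
qed

lemma carriers:
  assumes a: "a \<in> {1..J}"
  shows "KaP a \<in> carrier_mat L (m a)" "KPP a \<in> carrier_mat (m a) (m a)"
    "KPa a \<in> carrier_mat (m a) L" "Kaa a \<in> carrier_mat L L"
    "minv (KPP a) \<in> carrier_mat (m a) (m a)"
    "KPP a * minv (KPP a) = 1\<^sub>m (m a)" "minv (KPP a) * KPP a = 1\<^sub>m (m a)"
    "FF a \<in> carrier_mat L (m a)" "QQ a \<in> carrier_mat L L"
proof -
  have a1: "1 \<le> a" using a by simp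
  show 1: "KaP a \<in> carrier_mat L (m a)" "KPP a \<in> carrier_mat (m a) (m a)"
    "KPa a \<in> carrier_mat (m a) L" "Kaa a \<in> carrier_mat L L"
    unfolding Kblk_gen[OF a1] by simp_all
  note mi = minv_inv[OF 1(2) KPP_inv[OF a]]
  show "minv (KPP a) \<in> carrier_mat (m a) (m a)"
    "KPP a * minv (KPP a) = 1\<^sub>m (m a)" "minv (KPP a) * KPP a = 1\<^sub>m (m a)" using mi by blast+
  show "FF a \<in> carrier_mat L (m a)" unfolding Fj_def using 1 mi by auto
  show "QQ a \<in> carrier_mat L L" unfolding Qj_def using 1 mi by auto
qed

lemma FF_KPP:
  assumes a: "a \<in> {1..J}"
  shows "FF a * KPP a = KaP a"
proof -
  note c = carriers[OF a]
  have "FF a * KPP a = KaP a * (minv (KPP a) * KPP a)"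
    unfolding Fj_def using c by (simp add: assoc_mult_mat[OF c(1) c(5) c(2)])
  also have "\<dots> = KaP a" using c by simp
  finally show ?thesis .
qed

lemma QQ_eq: "QQ a = Kaa a - FF a * KPa a"
  unfolding Qj_def Fj_def by simp

end


context cp
begin

abbreviation "FM \<equiv> Fmat k A L J (pi_consec C)"
abbreviation "QM \<equiv> Qmat k A L J (pi_consec C)"

lemma mem_pc:
  assumes a: "1 \<le> a" and L0: "0 < L"
  shows "t div L + 1 \<in> pi_consec C a \<longleftrightarrow> lo a \<le> t \<and> t < lo a + m a"
proof -
  have le: "a - Ij C a \<le> t div L + 1 \<longleftrightarrow> a - Ij C a - 1 \<le> t div L" using Ij_le[of a] a by auto
  have lt: "t div L + 1 < a \<longleftrightarrow> t div L < a - 1" by auto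
  show ?thesis unfolding pc_ivl lo_m atLeastLessThan_iff le lt lo_def
    using less_eq_div_iff_mult_less_eq[OF L0, of "a - Ij C a - 1" t]
      div_less_iff_less_mult[OF L0, of t "a - 1"] lo_m[of a, unfolded lo_def] by simp
qed

lemma Fent:
  assumes r: "r < L*J" and t: "t < L*J"
  shows "FM $$ (r,t) = (if t = r then 1 else 0)
      - (if lo (r div L + 1) \<le> t \<and> t < lo (r div L + 1) + m (r div L + 1)
         then FF (r div L + 1) $$ (r mod L, t - lo (r div L + 1)) else 0)"
proof -
  define a where "a = r div L + 1"
  have L0: "0 < L" using L by simp
  have a1: "1 \<le> a" unfolding a_def by simp
  have hi: "lo a + m a = (r div L) * L" unfolding lo_m a_def by simp
  have ent: "FM $$ (r,t) = (if a = t div L + 1 then (if r = t then 1 else 0)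
      else if t div L + 1 \<in> pi_consec C a then
        - (FF a $$ (r mod L, card {i \<in> pi_consec C a. i < t div L + 1} * L + t mod L))
      else 0)"
    unfolding Fmat_def a_def using r t by (simp add: Let_def)
  show ?thesis
  proof (cases "t div L = r div L")
    case True
    have "\<not> t < lo a + m a" unfolding hi using True
      by (metis div_mult_mod_eq le_add1 not_less)
    then show ?thesis unfolding ent a_def[symmetric] using True a_def by auto
  next
    case False
    then have tr: "t \<noteq> r" by auto
    show ?thesis
    proof (cases "t div L + 1 \<in> pi_consec C a")
      case True
      then have rng: "lo a \<le> t" "t < lo a + m a" using mem_pc[OF a1 L0] by auto
      have lt: "t div L + 1 < a" using True unfolding pc_ivl by simp
      have ge: "a - Ij C a \<le> t div L + 1" using True unfolding pc_ivl by simp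
      have "{i \<in> pi_consec C a. i < t div L + 1} = {a - Ij C a ..< t div L + 1}"
        unfolding pc_ivl using lt by auto
      have i1: "1 \<le> a - Ij C a" using Ij_le[of a] a1 by simp
      have "card {a - Ij C a ..< t div L + 1} = t div L - (a - Ij C a - 1)"
        using ge i1 by simp
      then have cd: "card {i \<in> pi_consec C a. i < t div L + 1} = t div L - (a - Ij C a - 1)"
        using \<open>{i \<in> pi_consec C a. i < t div L + 1} = _\<close> by simp
      have b: "a - Ij C a - 1 \<le> t div L" using ge by simp
      have "(t div L - (a - Ij C a - 1)) * L + t mod L = t - lo a"
      proof -
        have e: "t = t div L * L + t mod L" by simp
        have "(t div L - (a - Ij C a - 1)) * L = t div L * L - (a - Ij C a - 1) * L"
          by (simp add: diff_mult_distrib)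
        moreover have "(a - Ij C a - 1) * L \<le> t div L * L" using b by simp
        ultimately show ?thesis unfolding lo_def using e by linarith
      qed
      then show ?thesis unfolding ent a_def[symmetric] using False True tr rng cd a_def by simp
    next
      case False2: False
      then have "\<not> (lo a \<le> t \<and> t < lo a + m a)" using mem_pc[OF a1 L0] by auto
      then show ?thesis unfolding ent a_def[symmetric] using False False2 tr a_def by auto
    qed
  qed
qed

lemma Fsum:
  assumes r: "r < L*J"
  shows "(\<Sum>t<L*J. FM $$ (r,t) * g t) = g r
     - (\<Sum>s<m (r div L + 1). FF (r div L + 1) $$ (r mod L, s) * g (lo (r div L + 1) + s))"
proof -
  define a where "a = r div L + 1"
  have hi: "lo a + m a = (r div L) * L" unfolding lo_m a_def by simp
  have hin: "lo a + m a \<le> L*J" unfolding hi using r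
    by (metis div_mult_mod_eq le_add1 le_trans less_imp_le_nat)
  have "(\<Sum>t<L*J. FM $$ (r,t) * g t) = (\<Sum>t<L*J. (if t = r then g t else 0)
      - (if lo a \<le> t \<and> t < lo a + m a then FF a $$ (r mod L, t - lo a) * g t else 0))"
    by (rule sum.cong) (simp_all add: Fent[OF r] a_def left_diff_distrib)
  also have "\<dots> = g r - (\<Sum>t<L*J. if lo a \<le> t \<and> t < lo a + m a then FF a $$ (r mod L, t - lo a) * g t else 0)"
    using r by (simp add: sum_subtractf)
  also have "(\<Sum>t<L*J. if lo a \<le> t \<and> t < lo a + m a then FF a $$ (r mod L, t - lo a) * g t else 0)
      = (\<Sum>t\<in>{lo a..<lo a + m a}. FF a $$ (r mod L, t - lo a) * g t)"
  proof -
    have "{t \<in> {..<L*J}. lo a \<le> t \<and> t < lo a + m a} = {lo a..<lo a + m a}" using hin by auto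
    then show ?thesis using sum.inter_filter[of "{..<L*J}" "\<lambda>t. FF a $$ (r mod L, t - lo a) * g t"
        "\<lambda>t. lo a \<le> t \<and> t < lo a + m a"] by simp
  qed
  also have "\<dots> = (\<Sum>s<m a. FF a $$ (r mod L, s) * g (lo a + s))"
  proof -
    have e: "(\<Sum>t\<in>{0 + lo a..<m a + lo a}. FF a $$ (r mod L, t - lo a) * g t)
       = (\<Sum>s\<in>{0..<m a}. FF a $$ (r mod L, s + lo a - lo a) * g (s + lo a))"
      by (rule sum.shift_bounds_nat_ivl)
    have e2: "{0 + lo a..<m a + lo a} = {lo a..<lo a + m a}" by (simp add: add.commute)
    show ?thesis using e unfolding e2 by (simp add: lessThan_atLeast0 add.commute)
  qed
  finally show ?thesis unfolding a_def .
qed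

lemma Fdiag:
  assumes t: "t < L*J" and c: "c < L*J" and le: "t div L \<le> c div L"
  shows "FM $$ (t,c) = (if c = t then 1 else 0)"
proof -
  have hi: "lo (t div L + 1) + m (t div L + 1) = (t div L) * L" unfolding lo_m by simp
  have "t div L * L \<le> c div L * L" using le by simp
  also have "\<dots> \<le> c" by (metis div_mult_mod_eq le_add1)
  finally have "\<not> c < lo (t div L + 1) + m (t div L + 1)" unfolding hi by simp
  then show ?thesis unfolding Fent[OF t c] by simp
qed

lemma FM_carrier: "FM \<in> carrier_mat (L*J) (L*J)" unfolding Fmat_def by (rule mat_carrier)
lemma QM_carrier: "QM \<in> carrier_mat (L*J) (L*J)" unfolding Qmat_def by (rule mat_carrier)

lemma tri:
  assumes Z: "Z \<in> carrier_mat (L*J) (L*J)" and ZF: "Z * FM = 1\<^sub>m (L*J)"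
    and r: "r < L*J"
  shows "c < L*J \<Longrightarrow> r div L \<le> c div L \<Longrightarrow> Z $$ (r,c) = (if r = c then 1 else 0)"
proof (induction c rule: measure_induct_rule[of "\<lambda>c. L*J - c div L"])
  case (less c)
  have "(Z * FM) $$ (r,c) = (\<Sum>t<L*J. Z $$ (r,t) * FM $$ (t,c))"
    by (rule mult_entry[OF Z FM_carrier r less.prems(1)])
  also have "\<dots> = (\<Sum>t<L*J. Z $$ (r,t) * (if c = t then 1 else 0))"
  proof (rule sum.cong)
    fix t assume "t \<in> {..<L*J}"
    then have t: "t < L*J" by simp
    show "Z $$ (r,t) * FM $$ (t,c) = Z $$ (r,t) * (if c = t then 1 else 0)"
    proof (cases "t div L \<le> c div L")
      case True then show ?thesis using Fdiag[OF t less.prems(1)] by simp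
    next
      case False
      have "t div L \<le> t" by simp
      then have "L*J - t div L < L*J - c div L" using False t by linarith
      moreover have "r div L \<le> t div L" using False less.prems(2) by linarith
      ultimately have "Z $$ (r,t) = (if r = t then 1 else 0)" using less.IH t by blast
      moreover have "r \<noteq> t" "c \<noteq> t" using False less.prems(2) by auto
      ultimately show ?thesis by simp
    qed
  qed simp
  also have "\<dots> = Z $$ (r,c)" using less.prems(1) by (simp add: if_distrib[of "\<lambda>x. _ * x"] cong: if_cong)
  finally show ?case using ZF r less.prems(1) by simp
qed

end


context cp
begin

definition bd :: "(nat \<Rightarrow> real mat) \<Rightarrow> real mat" where
  "bd D = mat (L*J) (L*J) (\<lambda>(r,c). if r div L = c div L then D (r div L) $$ (r mod L, c mod L) else 0)"

lemma bd_carrier: "bd D \<in> carrier_mat (L*J) (L*J)" unfolding bd_def by (rule mat_carrier)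

lemma bd_mult:
  assumes D: "\<And>b. b < J \<Longrightarrow> D b \<in> carrier_mat L L"
    and E: "\<And>b. b < J \<Longrightarrow> E b \<in> carrier_mat L L"
    and G: "\<And>b. b < J \<Longrightarrow> D b * E b = G b"
  shows "bd D * bd E = bd G"
proof (rule eq_matI)
  fix r c assume rc: "r < dim_row (bd G)" "c < dim_col (bd G)"
  then have r: "r < L*J" and c: "c < L*J" unfolding bd_def by simp_all
  define b where "b = r div L"
  have rb: "r div L = b" unfolding b_def ..
  have L0: "0 < L" using L by simp
  have bJ: "b < J" unfolding b_def using r L0 by (simp add: div_less_iff_less_mult mult.commute)
  have bL: "b*L + L \<le> L*J" using bJ
    by (metis add.commute mult.commute mult_Suc_right Suc_leI mult_le_mono2)
  have "(bd D * bd E) $$ (r,c) = (\<Sum>t<L*J. bd D $$ (r,t) * bd E $$ (t,c))"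
    by (rule mult_entry[OF bd_carrier bd_carrier r c])
  also have "\<dots> = (\<Sum>t\<in>{b*L..<b*L+L}. bd D $$ (r,t) * bd E $$ (t,c))"
  proof (rule sum.mono_neutral_right)
    show "finite {..<L*J}" by simp
    show "{b*L..<b*L+L} \<subseteq> {..<L*J}" using bL by auto
    show "\<forall>t\<in>{..<L*J} - {b*L..<b*L+L}. bd D $$ (r,t) * bd E $$ (t,c) = 0"
    proof
      fix t assume t: "t \<in> {..<L*J} - {b*L..<b*L+L}"
      then have "t div L \<noteq> b" using blk_iff[OF L0, of b t] by auto
      then show "bd D $$ (r,t) * bd E $$ (t,c) = 0" unfolding bd_def b_def using t r by auto
    qed
  qed
  also have "\<dots> = (\<Sum>s\<in>{0..<L}. bd D $$ (r,s + b*L) * bd E $$ (s + b*L,c))"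
  proof -
    have e2: "{0 + b*L..<L + b*L} = {b*L..<b*L+L}" by (simp add: add.commute)
    show ?thesis using sum.shift_bounds_nat_ivl[of "\<lambda>t. bd D $$ (r,t) * bd E $$ (t,c)" 0 "b*L" L]
      unfolding e2 by simp
  qed
  also have "\<dots> = (\<Sum>s<L. D b $$ (r mod L, s) * (if b = c div L then E b $$ (s, c mod L) else 0))"
  proof (rule sum.cong)
    fix s assume s: "s \<in> {..<L}"
    then have sd: "\<And>x. (s + x*L) div L = x" and sm: "(s + b*L) mod L = s" using L0 by auto
    have sn: "s + b*L < L*J" using s bL by simp
    show "bd D $$ (r,s + b*L) * bd E $$ (s + b*L,c)
        = D b $$ (r mod L, s) * (if b = c div L then E b $$ (s, c mod L) else 0)"
      unfolding bd_def using r c sn sd sm rb by simp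
  qed (simp add: lessThan_atLeast0)
  also have "\<dots> = (if b = c div L then (D b * E b) $$ (r mod L, c mod L) else 0)"
  proof (cases "b = c div L")
    case True
    have "(D b * E b) $$ (r mod L, c mod L) = (\<Sum>s<L. D b $$ (r mod L, s) * E b $$ (s, c mod L))"
      by (rule mult_entry[OF D[OF bJ] E[OF bJ]]) (simp_all add: L0)
    then show ?thesis using True by simp
  qed simp
  also have "\<dots> = bd G $$ (r,c)" unfolding bd_def using r c G[OF bJ] rb by (cases "b = c div L") auto
  finally show "(bd D * bd E) $$ (r,c) = bd G $$ (r,c)" .
qed (simp_all add: bd_def)

lemma bd_one: "bd (\<lambda>b. 1\<^sub>m L) = 1\<^sub>m (L*J)"
proof (rule eq_matI)
  fix r c assume rc: "r < dim_row (1\<^sub>m (L*J) :: real mat)" "c < dim_col (1\<^sub>m (L*J) :: real mat)"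
  then have r: "r < L*J" and c: "c < L*J" by simp_all
  have L0: "0 < L" using L by simp
  have "r mod L < L" "c mod L < L" using L0 by simp_all
  moreover have "r = c \<longleftrightarrow> r div L = c div L \<and> r mod L = c mod L"
    by (metis div_mult_mod_eq)
  ultimately show "bd (\<lambda>b. 1\<^sub>m L) $$ (r,c) = 1\<^sub>m (L*J) $$ (r,c)"
    unfolding bd_def using r c by auto
qed (simp_all add: bd_def)

lemma QM_bd: "QM = bd (\<lambda>b. QQ (b+1))"
  unfolding Qmat_def bd_def by simp

lemma Qinv:
  "QM * bd (\<lambda>b. minv (QQ (b+1))) = 1\<^sub>m (L*J)" "bd (\<lambda>b. minv (QQ (b+1))) * QM = 1\<^sub>m (L*J)"
proof -
  have mi: "minv (QQ (b+1)) \<in> carrier_mat L L \<and> QQ (b+1) * minv (QQ (b+1)) = 1\<^sub>m L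
       \<and> minv (QQ (b+1)) * QQ (b+1) = 1\<^sub>m L" if "b < J" for b
  proof -
    have a: "b + 1 \<in> {1..J}" using that by simp
    show ?thesis using minv_inv[OF carriers(9)[OF a] invQ[OF a]] .
  qed
  have qc: "QQ (b+1) \<in> carrier_mat L L" if "b < J" for b using carriers(9)[of "b+1"] that by simp
  show "QM * bd (\<lambda>b. minv (QQ (b+1))) = 1\<^sub>m (L*J)"
    unfolding QM_bd bd_one[symmetric] by (rule bd_mult) (use mi qc in auto)
  show "bd (\<lambda>b. minv (QQ (b+1))) * QM = 1\<^sub>m (L*J)"
    unfolding QM_bd bd_one[symmetric] by (rule bd_mult) (use mi qc in auto)
qed

abbreviation "MM \<equiv> minv QM"

lemma MM:
  "MM \<in> carrier_mat (L*J) (L*J)" "QM * MM = 1\<^sub>m (L*J)" "MM * QM = 1\<^sub>m (L*J)"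
proof -
  have "invertible_mat QM" unfolding invertible_mat_def inverts_mat_def
    using Qinv QM_carrier by (intro conjI exI[of _ "bd (\<lambda>b. minv (QQ (b+1)))"]) (auto simp: bd_def)
  note mi = minv_inv[OF QM_carrier this]
  show "MM \<in> carrier_mat (L*J) (L*J)" "QM * MM = 1\<^sub>m (L*J)" "MM * QM = 1\<^sub>m (L*J)" using mi by blast+
qed

lemma QM_ent: "r < L*J \<Longrightarrow> c < L*J \<Longrightarrow>
   QM $$ (r,c) = (if r div L = c div L then QQ (r div L + 1) $$ (r mod L, c mod L) else 0)"
  unfolding Qmat_def by simp

end


context cp
begin

abbreviation "SM \<equiv> Smat k A L J (pi_consec C)"
abbreviation "SG \<equiv> minv SM"

lemma SM_eq: "SM = transpose_mat FM * MM * FM" unfolding Smat_def ..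

lemma SM_carrier: "SM \<in> carrier_mat (L*J) (L*J)"
  unfolding SM_eq using FM_carrier MM(1) by auto

lemma det_FM: "Determinant.det FM = 1"
proof -
  have "Determinant.det FM = prod_list (diag_mat FM)"
  proof (rule det_lower_triangular[OF _ FM_carrier])
    fix i j assume ij: "i < j" "j < L*J"
    have "i div L \<le> j div L" using ij by (simp add: div_le_mono)
    then show "FM $$ (i,j) = 0" using Fdiag[of i j] ij by simp
  qed
  also have "\<dots> = (\<Prod>i = 0..<L*J. FM $$ (i,i))" unfolding prod_list_diag_prod using FM_carrier by simp
  also have "\<dots> = (\<Prod>i = 0..<L*J. 1)" by (rule prod.cong) (simp_all add: Fdiag)
  finally show ?thesis by simp
qed

lemma SM_inv: "invertible_mat SM"
proof -
  have dM: "Determinant.det MM \<noteq> 0"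
  proof
    assume "Determinant.det MM = 0"
    then have "Determinant.det (MM * QM) = 0" using det_mult[OF MM(1) QM_carrier] by simp
    then show False using MM(3) by simp
  qed
  have FT: "transpose_mat FM \<in> carrier_mat (L*J) (L*J)" using FM_carrier by simp
  have "Determinant.det SM = Determinant.det (transpose_mat FM) * Determinant.det MM * Determinant.det FM"
    unfolding SM_eq using det_mult[OF mult_carrier_mat[OF FT MM(1)] FM_carrier] det_mult[OF FT MM(1)]
    by simp
  also have "\<dots> = Determinant.det MM" using det_transpose[OF FM_carrier] det_FM by simp
  finally have "Determinant.det SM \<noteq> 0" using dM by simp
  from det_non_zero_imp_unit[OF SM_carrier this, of undefined]
  obtain X where X: "X \<in> carrier_mat (L*J) (L*J)" "X * SM = 1\<^sub>m (L*J)" "SM * X = 1\<^sub>m (L*J)"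
    unfolding Units_def ring_mat_simps by auto
  show ?thesis unfolding invertible_mat_def inverts_mat_def using X SM_carrier by auto
qed

lemma SG: "SG \<in> carrier_mat (L*J) (L*J)" "SM * SG = 1\<^sub>m (L*J)" "SG * SM = 1\<^sub>m (L*J)"
  using minv_inv[OF SM_carrier SM_inv] by blast+

lemma E1:
  assumes G1: "G \<in> carrier_mat (L*J) (L*J)" and G2: "SM * G = 1\<^sub>m (L*J)" and G3: "G * SM = 1\<^sub>m (L*J)"
    and r: "r < L*J" and c: "c < L*J" and le: "c div L \<le> r div L"
  shows "G $$ (r,c) - (\<Sum>s<m (r div L + 1). FF (r div L + 1) $$ (r mod L, s) * G $$ (lo (r div L + 1) + s, c))
      = QM $$ (r,c)"
proof -
  have FT: "transpose_mat FM \<in> carrier_mat (L*J) (L*J)" using FM_carrier by simp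
  note M = MM(1) and F = FM_carrier and S = G1
  define Y where "Y = MM * (FM * G)"
  have Yc: "Y \<in> carrier_mat (L*J) (L*J)" unfolding Y_def using M F S by auto
  have "SM * G = (transpose_mat FM * MM) * (FM * G)"
    unfolding SM_eq by (rule assoc_mult_mat[OF mult_carrier_mat[OF FT M] F S])
  also have "\<dots> = transpose_mat FM * Y"
    unfolding Y_def by (rule assoc_mult_mat[OF FT M mult_carrier_mat[OF F S]])
  finally have "SM * G = transpose_mat FM * Y" .
  then have 1: "transpose_mat FM * Y = 1\<^sub>m (L*J)" using G2 by simp
  have "transpose_mat Y * FM = transpose_mat (transpose_mat FM * Y)"
    using transpose_mult[OF FT Yc] by simp
  then have 2: "transpose_mat Y * FM = 1\<^sub>m (L*J)" unfolding 1 by simp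
  have YT: "transpose_mat Y \<in> carrier_mat (L*J) (L*J)" using Yc by simp
  have Yd: "Y $$ (t,c') = (if t = c' then 1 else 0)" if "t < L*J" "c' < L*J" "c' div L \<le> t div L" for t c'
  proof -
    have "transpose_mat Y $$ (c',t) = (if c' = t then 1 else 0)"
      by (rule tri[OF YT 2 that(2) that(1) that(3)])
    then show ?thesis using that Yc by auto
  qed
  have "QM * Y = (QM * MM) * (FM * G)"
    unfolding Y_def by (rule assoc_mult_mat[OF QM_carrier M mult_carrier_mat[OF F S], symmetric])
  then have QY: "QM * Y = FM * G" using MM(2) F S by simp
  have "(FM * G) $$ (r,c) = (\<Sum>t<L*J. QM $$ (r,t) * Y $$ (t,c))"
    unfolding QY[symmetric] by (rule mult_entry[OF QM_carrier Yc r c])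
  also have "\<dots> = (\<Sum>t<L*J. QM $$ (r,t) * (if t = c then 1 else 0))"
  proof (rule sum.cong)
    fix t assume "t \<in> {..<L*J}"
    then have t: "t < L*J" by simp
    show "QM $$ (r,t) * Y $$ (t,c) = QM $$ (r,t) * (if t = c then 1 else 0)"
    proof (cases "t div L = r div L")
      case True then show ?thesis using Yd[OF t c] le by simp
    next
      case False then show ?thesis using QM_ent[OF r t] by simp
    qed
  qed simp
  also have "\<dots> = QM $$ (r,c)" using c by (simp add: if_distrib[of "\<lambda>x. _ * x"] cong: if_cong)
  finally have a: "(FM * G) $$ (r,c) = QM $$ (r,c)" .
  have "(FM * G) $$ (r,c) = (\<Sum>t<L*J. FM $$ (r,t) * G $$ (t,c))"
    by (rule mult_entry[OF F S r c])
  also have "\<dots> = G $$ (r,c) - (\<Sum>s<m (r div L + 1). FF (r div L + 1) $$ (r mod L, s) * G $$ (lo (r div L + 1) + s, c))"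
    by (rule Fsum[OF r])
  finally show ?thesis using a by simp
qed

lemma E2:
  assumes G1: "G \<in> carrier_mat (L*J) (L*J)" and G2: "SM * G = 1\<^sub>m (L*J)" and G3: "G * SM = 1\<^sub>m (L*J)"
    and r: "r < L*J" and c: "c < L*J" and le: "r div L \<le> c div L"
  shows "G $$ (r,c) - (\<Sum>s<m (c div L + 1). FF (c div L + 1) $$ (c mod L, s) * G $$ (r, lo (c div L + 1) + s))
      = QM $$ (r,c)"
proof -
  have FT: "transpose_mat FM \<in> carrier_mat (L*J) (L*J)" using FM_carrier by simp
  note M = MM(1) and F = FM_carrier and S = G1
  define Z where "Z = G * (transpose_mat FM * MM)"
  have Zc: "Z \<in> carrier_mat (L*J) (L*J)" unfolding Z_def using M FT S by auto
  have "G * SM = Z * FM"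
    unfolding SM_eq Z_def by (rule assoc_mult_mat[OF S mult_carrier_mat[OF FT M] F, symmetric])
  then have 1: "Z * FM = 1\<^sub>m (L*J)" using G3 by simp
  have Zd: "Z $$ (r,t) = (if r = t then 1 else 0)" if "t < L*J" "r div L \<le> t div L" for t
    by (rule tri[OF Zc 1 r that(1) that(2)])
  have "Z * QM = G * ((transpose_mat FM * MM) * QM)"
    unfolding Z_def by (rule assoc_mult_mat[OF S mult_carrier_mat[OF FT M] QM_carrier])
  also have "\<dots> = G * (transpose_mat FM * (MM * QM))"
    using assoc_mult_mat[OF FT M QM_carrier] by (rule arg_cong)
  finally have "Z * QM = G * (transpose_mat FM * (MM * QM))" .
  then have ZQ: "Z * QM = G * transpose_mat FM" using MM(3) FT by simp
  have "(G * transpose_mat FM) $$ (r,c) = (\<Sum>t<L*J. Z $$ (r,t) * QM $$ (t,c))"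
    unfolding ZQ[symmetric] by (rule mult_entry[OF Zc QM_carrier r c])
  also have "\<dots> = (\<Sum>t<L*J. (if r = t then 1 else 0) * QM $$ (t,c))"
  proof (rule sum.cong)
    fix t assume "t \<in> {..<L*J}"
    then have t: "t < L*J" by simp
    show "Z $$ (r,t) * QM $$ (t,c) = (if r = t then 1 else 0) * QM $$ (t,c)"
    proof (cases "t div L = c div L")
      case True then show ?thesis using Zd[OF t] le by simp
    next
      case False then show ?thesis using QM_ent[OF t c] by simp
    qed
  qed simp
  also have "\<dots> = QM $$ (r,c)" using r by (simp add: if_distrib[of "\<lambda>x. x * _"] cong: if_cong)
  finally have a: "(G * transpose_mat FM) $$ (r,c) = QM $$ (r,c)" .
  have "(G * transpose_mat FM) $$ (r,c) = (\<Sum>t<L*J. G $$ (r,t) * transpose_mat FM $$ (t,c))"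
    by (rule mult_entry[OF S FT r c])
  also have "\<dots> = (\<Sum>t<L*J. FM $$ (c,t) * G $$ (r,t))"
    using F c by (intro sum.cong) auto
  also have "\<dots> = G $$ (r,c) - (\<Sum>s<m (c div L + 1). FF (c div L + 1) $$ (c mod L, s) * G $$ (r, lo (c div L + 1) + s))"
    by (rule Fsum[OF c])
  finally show ?thesis using a by simp
qed

end


context cp
begin

definition band :: "nat \<Rightarrow> nat \<Rightarrow> bool" where
  "band r c \<longleftrightarrow> r < L*J \<and> c < L*J \<and> r div L \<le> c div L + (C - 1) \<and> c div L \<le> r div L + (C - 1)"

lemmas E1S = E1[OF SG(1) SG(2) SG(3)]
lemmas E2S = E2[OF SG(1) SG(2) SG(3)]

lemma blk_facts:
  assumes r: "r < L*J"
  shows "r div L < J" "r div L + 1 \<in> {1..J}" "(r div L + 1 - 1) * L + r mod L = r"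
    "lo (r div L + 1) = (r div L - min (r div L) (C - 1)) * L"
    "lo (r div L + 1) + m (r div L + 1) = r div L * L"
proof -
  have L0: "0 < L" using L by simp
  show j: "r div L < J" using r L0 by (simp add: div_less_iff_less_mult mult.commute)
  then show "r div L + 1 \<in> {1..J}" by simp
  show "(r div L + 1 - 1) * L + r mod L = r" by simp
  show "lo (r div L + 1) = (r div L - min (r div L) (C - 1)) * L" unfolding lo_def Ij_def by simp
  show "lo (r div L + 1) + m (r div L + 1) = r div L * L" unfolding lo_m by simp
qed

lemma in_range:
  assumes "lo a \<le> t" "t < lo a + m a" "a = h + 1" 
  shows "h - min h (C - 1) \<le> t div L" "t div L < h"
proof -
  have L0: "0 < L" using L by simp
  have "lo a = (h - min h (C - 1)) * L" unfolding lo_def Ij_def assms(3) by simp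
  then show "h - min h (C - 1) \<le> t div L" using assms(1) less_eq_div_iff_mult_less_eq[OF L0] by simp
  have "lo a + m a = h * L" unfolding lo_m assms(3) by simp
  then show "t div L < h" using assms(2) div_less_iff_less_mult[OF L0] by simp
qed

lemma offL:
  assumes IH: "\<And>r' c'. band r' c' \<Longrightarrow> max (r' div L) (c' div L) < h \<Longrightarrow> SG $$ (r',c') = k (A r') (A c')"
    and b: "band r c" and rh: "r div L = h" and ch: "c div L < h"
  shows "SG $$ (r,c) = k (A r) (A c)"
proof -
  have L0: "0 < L" using L by simp
  have r: "r < L*J" and c: "c < L*J" using b unfolding band_def by auto
  define a where "a = h + 1"
  note bf = blk_facts[OF r, unfolded rh a_def[symmetric]]
  have aJ: "a \<in> {1..J}" using bf a_def by simp
  have a1: "1 \<le> a" using aJ by simp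
  have "SG $$ (r,c) - (\<Sum>s<m a. FF a $$ (r mod L, s) * SG $$ (lo a + s, c)) = QM $$ (r,c)"
    using E1S[OF r c] ch rh a_def by simp
  moreover have "QM $$ (r,c) = 0" using QM_ent[OF r c] rh ch by simp
  ultimately have e: "SG $$ (r,c) = (\<Sum>s<m a. FF a $$ (r mod L, s) * SG $$ (lo a + s, c))" by simp
  have cd: "h - min h (C - 1) \<le> c div L" using b rh unfolding band_def by linarith
  have cc: "c div L * L \<le> c" using div_mult_mod_eq[of c L] by linarith
  have clo: "lo a \<le> c" using bf(4) mult_le_mono1[OF cd, of L] cc by linarith
  have chi: "c < lo a + m a" using bf(5) ch div_less_iff_less_mult[OF L0] by simp
  have cm: "c - lo a < m a" using clo chi by linarith
  have "(\<Sum>s<m a. FF a $$ (r mod L, s) * SG $$ (lo a + s, c))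
      = (\<Sum>s<m a. FF a $$ (r mod L, s) * KPP a $$ (s, c - lo a))"
  proof (rule sum.cong)
    fix s assume "s \<in> {..<m a}"
    then have s: "s < m a" by simp
    have t1: "lo a \<le> lo a + s" "lo a + s < lo a + m a" using s by simp_all
    note tr = in_range[OF t1 a_def]
    have rr: "h * L \<le> r" unfolding rh[symmetric] using div_mult_mod_eq[of r L] by linarith
    have tn: "lo a + s < L*J" using t1(2) bf(5) r rr by linarith
    have "band (lo a + s) c" unfolding band_def using tn c tr cd ch by linarith
    moreover have "max ((lo a + s) div L) (c div L) < h" using tr ch by simp
    ultimately have "SG $$ (lo a + s, c) = k (A (lo a + s)) (A c)" using IH by blast
    also have "\<dots> = KPP a $$ (s, c - lo a)" unfolding Kblk_gen(2)[OF a1] using s cm clo by simp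
    finally show "FF a $$ (r mod L, s) * SG $$ (lo a + s, c) = FF a $$ (r mod L, s) * KPP a $$ (s, c - lo a)"
      by simp
  qed simp
  also have "\<dots> = (FF a * KPP a) $$ (r mod L, c - lo a)"
    by (rule mult_entry[OF carriers(8)[OF aJ] carriers(2)[OF aJ], symmetric]) (simp_all add: L0 cm)
  also have "\<dots> = KaP a $$ (r mod L, c - lo a)" unfolding FF_KPP[OF aJ] ..
  also have "\<dots> = k (A r) (A c)" unfolding Kblk_gen(1)[OF a1] using L0 cm clo bf(3) by simp
  finally show ?thesis using e by simp
qed

lemma offR:
  assumes IH: "\<And>r' c'. band r' c' \<Longrightarrow> max (r' div L) (c' div L) < h \<Longrightarrow> SG $$ (r',c') = k (A r') (A c')"
    and b: "band r c" and ch: "c div L = h" and rh: "r div L < h"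
  shows "SG $$ (r,c) = k (A r) (A c)"
proof -
  have L0: "0 < L" using L by simp
  have r: "r < L*J" and c: "c < L*J" using b unfolding band_def by auto
  define a where "a = h + 1"
  note bf = blk_facts[OF c, unfolded ch a_def[symmetric]]
  have aJ: "a \<in> {1..J}" using bf a_def by simp
  have a1: "1 \<le> a" using aJ by simp
  have "SG $$ (r,c) - (\<Sum>s<m a. FF a $$ (c mod L, s) * SG $$ (r, lo a + s)) = QM $$ (r,c)"
    using E2S[OF r c] ch rh a_def by simp
  moreover have "QM $$ (r,c) = 0" using QM_ent[OF r c] rh ch by simp
  ultimately have e: "SG $$ (r,c) = (\<Sum>s<m a. FF a $$ (c mod L, s) * SG $$ (r, lo a + s))" by simp
  have cd: "h - min h (C - 1) \<le> r div L" using b ch unfolding band_def by linarith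
  have cc: "r div L * L \<le> r" using div_mult_mod_eq[of r L] by linarith
  have clo: "lo a \<le> r" using bf(4) mult_le_mono1[OF cd, of L] cc by linarith
  have chi: "r < lo a + m a" using bf(5) rh div_less_iff_less_mult[OF L0] by simp
  have cm: "r - lo a < m a" using clo chi by linarith
  have "(\<Sum>s<m a. FF a $$ (c mod L, s) * SG $$ (r, lo a + s))
      = (\<Sum>s<m a. FF a $$ (c mod L, s) * KPP a $$ (s, r - lo a))"
  proof (rule sum.cong)
    fix s assume "s \<in> {..<m a}"
    then have s: "s < m a" by simp
    have t1: "lo a \<le> lo a + s" "lo a + s < lo a + m a" using s by simp_all
    note tr = in_range[OF t1 a_def]
    have rr: "h * L \<le> c" unfolding ch[symmetric] using div_mult_mod_eq[of c L] by linarith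
    have tn: "lo a + s < L*J" using t1(2) bf(5) c rr by linarith
    have "band r (lo a + s)" unfolding band_def using tn r tr cd rh by linarith
    moreover have "max (r div L) ((lo a + s) div L) < h" using tr rh by simp
    ultimately have "SG $$ (r, lo a + s) = k (A r) (A (lo a + s))" using IH by blast
    also have "\<dots> = k (A (lo a + s)) (A r)" by (rule ksym)
    also have "\<dots> = KPP a $$ (s, r - lo a)" unfolding Kblk_gen(2)[OF a1] using s cm clo by simp
    finally show "FF a $$ (c mod L, s) * SG $$ (r, lo a + s) = FF a $$ (c mod L, s) * KPP a $$ (s, r - lo a)"
      by simp
  qed simp
  also have "\<dots> = (FF a * KPP a) $$ (c mod L, r - lo a)"
    by (rule mult_entry[OF carriers(8)[OF aJ] carriers(2)[OF aJ], symmetric]) (simp_all add: L0 cm)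
  also have "\<dots> = KaP a $$ (c mod L, r - lo a)" unfolding FF_KPP[OF aJ] ..
  also have "\<dots> = k (A c) (A r)" unfolding Kblk_gen(1)[OF a1] using L0 cm clo bf(3) by simp
  finally show ?thesis using e ksym by simp
qed

lemma diagb:
  assumes IH: "\<And>r' c'. band r' c' \<Longrightarrow> max (r' div L) (c' div L) < h \<Longrightarrow> SG $$ (r',c') = k (A r') (A c')"
    and r: "r < L*J" and c: "c < L*J" and rh: "r div L = h" and ch: "c div L = h"
  shows "SG $$ (r,c) = k (A r) (A c)"
proof -
  have L0: "0 < L" using L by simp
  define a where "a = h + 1"
  note bf = blk_facts[OF r, unfolded rh a_def[symmetric]]
  note bfc = blk_facts[OF c, unfolded ch a_def[symmetric]]
  have aJ: "a \<in> {1..J}" using bf a_def by simp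
  have a1: "1 \<le> a" using aJ by simp
  have "SG $$ (r,c) - (\<Sum>s<m a. FF a $$ (r mod L, s) * SG $$ (lo a + s, c)) = QM $$ (r,c)"
    using E1S[OF r c] ch rh a_def by simp
  moreover have "QM $$ (r,c) = QQ a $$ (r mod L, c mod L)" using QM_ent[OF r c] rh ch a_def by simp
  ultimately have e: "SG $$ (r,c) = QQ a $$ (r mod L, c mod L)
      + (\<Sum>s<m a. FF a $$ (r mod L, s) * SG $$ (lo a + s, c))" by simp
  have "(\<Sum>s<m a. FF a $$ (r mod L, s) * SG $$ (lo a + s, c))
      = (\<Sum>s<m a. FF a $$ (r mod L, s) * KPa a $$ (s, c mod L))"
  proof (rule sum.cong)
    fix s assume "s \<in> {..<m a}"
    then have s: "s < m a" by simp
    have t1: "lo a \<le> lo a + s" "lo a + s < lo a + m a" using s by simp_all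
    note tr = in_range[OF t1 a_def]
    have rr: "h * L \<le> r" unfolding rh[symmetric] using div_mult_mod_eq[of r L] by linarith
    have tn: "lo a + s < L*J" using t1(2) bf(5) r rr by linarith
    have "band (lo a + s) c" unfolding band_def using tn c tr ch by linarith
    then have "SG $$ (lo a + s, c) = k (A (lo a + s)) (A c)"
      using offR[OF IH _ ch tr(2)] by blast
    also have "\<dots> = KPa a $$ (s, c mod L)" unfolding Kblk_gen(3)[OF a1] using s L0 bfc(3) by simp
    finally show "FF a $$ (r mod L, s) * SG $$ (lo a + s, c) = FF a $$ (r mod L, s) * KPa a $$ (s, c mod L)"
      by simp
  qed simp
  also have "\<dots> = (FF a * KPa a) $$ (r mod L, c mod L)"
    by (rule mult_entry[OF carriers(8)[OF aJ] carriers(3)[OF aJ], symmetric]) (simp_all add: L0)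
  finally have e2: "SG $$ (r,c) = QQ a $$ (r mod L, c mod L) + (FF a * KPa a) $$ (r mod L, c mod L)"
    using e by simp
  have FK: "FF a * KPa a \<in> carrier_mat L L" using carriers(8,3)[OF aJ] by auto
  have "QQ a $$ (r mod L, c mod L) = Kaa a $$ (r mod L, c mod L) - (FF a * KPa a) $$ (r mod L, c mod L)"
  proof -
    have d: "dim_row (FF a) = L" "dim_col (KPa a) = L" using carriers(8,3)[OF aJ] by auto
    have "r mod L < L" "c mod L < L" using L0 by simp_all
    then show ?thesis unfolding QQ_eq by (intro index_minus_mat(1)) (simp_all add: d)
  qed
  then have "SG $$ (r,c) = Kaa a $$ (r mod L, c mod L)" using e2 by simp
  also have "\<dots> = k (A r) (A c)" unfolding Kblk_gen(4)[OF a1] using L0 bf(3) bfc(3) by simp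
  finally show ?thesis .
qed

lemma main_band: "band r c \<Longrightarrow> SG $$ (r,c) = k (A r) (A c)"
proof (induction "max (r div L) (c div L)" arbitrary: r c rule: less_induct)
  case (less r c)
  define h where "h = max (r div L) (c div L)"
  have IH: "\<And>r' c'. band r' c' \<Longrightarrow> max (r' div L) (c' div L) < h \<Longrightarrow> SG $$ (r',c') = k (A r') (A c')"
    using less.hyps unfolding h_def by blast
  have r: "r < L*J" and c: "c < L*J" using less.prems unfolding band_def by auto
  consider "c div L < r div L" | "r div L < c div L" | "r div L = c div L" by linarith
  then show ?case
  proof cases
    case 1 then show ?thesis using offL[OF IH less.prems] h_def by simp
  next
    case 2 then show ?thesis using offR[OF IH less.prems] h_def by simp
  next
    case 3 then show ?thesis using diagb[OF IH r c] h_def by simp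
  qed
qed

lemma KAA_ent: "r < L*J \<Longrightarrow> c < L*J \<Longrightarrow> KAA k A L J $$ (r,c) = k (A r) (A c)"
proof -
  assume rc: "r < L*J" "c < L*J"
  have e: "{1..J} = {1..<J+1}" by auto
  have "KAA k A L J = mat ((J+1-1)*L) ((J+1-1)*L) (\<lambda>(i,j). k (A ((1-1)*L + i)) (A ((1-1)*L + j)))"
    unfolding KAA_def e by (rule Kblk_ivl) (use J in simp_all)
  then show ?thesis using rc by (simp add: mult.commute)
qed

lemma KAA_carrier: "KAA k A L J \<in> carrier_mat (L*J) (L*J)"
proof -
  have e: "{1..J} = {1..<J+1}" by auto
  have "KAA k A L J = mat ((J+1-1)*L) ((J+1-1)*L) (\<lambda>(i,j). k (A ((1-1)*L + i)) (A ((1-1)*L + j)))"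
    unfolding KAA_def e by (rule Kblk_ivl) (use J in simp_all)
  then show ?thesis by (simp add: mult.commute)
qed

lemma psi_box:
  assumes j: "j \<in> {1..J}"
  shows "\<exists>u. 1 \<le> u \<and> u + (C - 1) \<le> J \<and> psi C (pi_consec C) j \<subseteq> {u..u + (C - 1)}"
proof (cases "j < C")
  case True
  have "Ij C j = j - 1" unfolding Ij_def using True by simp
  then have "pi_consec C j = {1..<j}" unfolding pc_ivl using j by simp
  then have "psi C (pi_consec C) j \<subseteq> {1..1 + (C - 1)}" unfolding psi_def using True C1 j by auto
  then show ?thesis using CJ C1 by (intro exI[of _ 1]) simp
next
  case False
  have "Ij C j = C - 1" unfolding Ij_def using False by simp
  then have "pi_consec C j = {j - (C - 1)..<j}" unfolding pc_ivl by simp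
  then have "psi C (pi_consec C) j \<subseteq> {j - (C - 1)..j - (C - 1) + (C - 1)}"
    unfolding psi_def using False C1 j by auto
  then show ?thesis using False C1 j by (intro exI[of _ "j - (C - 1)"]) auto
qed

lemma part1:
  assumes j: "j \<in> {1..J}"
  shows "subblk L (psi C (pi_consec C) j) SG = subblk L (psi C (pi_consec C) j) (KAA k A L J)"
proof -
  obtain u where u: "1 \<le> u" "u + (C - 1) \<le> J" "psi C (pi_consec C) j \<subseteq> {u..u + (C - 1)}"
    using psi_box[OF j] by blast
  define ps where "ps = psi C (pi_consec C) j"
  have fin: "finite ps" using u(3) unfolding ps_def by (rule finite_subset) simp
  have z: "0 \<notin> ps" using u unfolding ps_def by auto
  define idx where "idx = blockrows L ps"
  have mem: "r div L + 1 \<in> {u..u + (C - 1)}" if "r \<in> set idx" for r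
    using set_blockrows[OF fin z L, of r] that u(3) unfolding idx_def ps_def by blast
  have bnd: "band r c" if "r \<in> set idx" "c \<in> set idx" for r c
  proof -
    have L0: "0 < L" using L by simp
    have "r div L < J" "c div L < J" using mem[OF that(1)] mem[OF that(2)] u by auto
    then have "r < L*J" "c < L*J" using div_less_iff_less_mult[OF L0] by (simp_all add: mult.commute)
    then show ?thesis unfolding band_def using mem[OF that(1)] mem[OF that(2)] by auto
  qed
  show ?thesis unfolding ps_def[symmetric] subblk_def Let_def idx_def[symmetric]
  proof (rule eq_matI)
    fix x y assume xy: "x < dim_row (mat (length idx) (length idx) (\<lambda>(a,b). KAA k A L J $$ (idx ! a, idx ! b)))"
       "y < dim_col (mat (length idx) (length idx) (\<lambda>(a,b). KAA k A L J $$ (idx ! a, idx ! b)))"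
    then have x: "x < length idx" and y: "y < length idx" by simp_all
    have b: "band (idx ! x) (idx ! y)" using bnd x y by simp
    then have "idx ! x < L*J" "idx ! y < L*J" unfolding band_def by auto
    then show "mat (length idx) (length idx) (\<lambda>(a,b). SG $$ (idx ! a, idx ! b)) $$ (x,y)
        = mat (length idx) (length idx) (\<lambda>(a,b). KAA k A L J $$ (idx ! a, idx ! b)) $$ (x,y)"
      using x y main_band[OF b] KAA_ent by simp
  qed simp_all
qed

lemma part2:
  assumes "C = J"
  shows "SG = KAA k A L J"
proof (rule eq_matI)
  fix r c assume rc: "r < dim_row (KAA k A L J)" "c < dim_col (KAA k A L J)"
  then have r: "r < L*J" and c: "c < L*J" using KAA_carrier by auto
  have L0: "0 < L" using L by simp
  have "r div L < J" "c div L < J" using r c div_less_iff_less_mult[OF L0] by (simp_all add: mult.commute)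
  then have "band r c" unfolding band_def using r c assms by auto
  then show "SG $$ (r,c) = KAA k A L J $$ (r,c)" using main_band KAA_ent r c by simp
qed (use SG(1) KAA_carrier in auto)

end

theorem mainTheorem11:
  fixes k :: "real^'d \<Rightarrow> real^'d \<Rightarrow> real"
    and A :: "nat \<Rightarrow> real^'d"
    and J L C :: nat
  assumes pd: "pos_def_kernel k"
    and J: "J \<ge> 1" and L: "L \<ge> 1"
    and C: "C \<in> {1..J}"
    and invK: "\<And>j. j \<in> {1..J} \<Longrightarrow> pi_consec C j \<noteq> {} \<Longrightarrow>
                 invertible_mat (Kblk k A L (pi_consec C j) (pi_consec C j))"
    and invQ: "\<And>j. j \<in> {1..J} \<Longrightarrow> invertible_mat (Qj k A L (pi_consec C) j)"
  shows "(\<forall>j \<in> {1..J}.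
            subblk L (psi C (pi_consec C) j) (minv (Smat k A L J (pi_consec C)))
          = subblk L (psi C (pi_consec C) j) (KAA k A L J))
       \<and> (C = J \<longrightarrow> minv (Smat k A L J (pi_consec C)) = KAA k A L J)"
proof -
  have ks: "\<And>x y. k x y = k y x" using pd unfolding pos_def_kernel_def by blast
  interpret cp k A J L C
    by (rule cp.intro) (use ks J L C invK invQ in auto)
  show ?thesis using part1 part2 by blast
qed

end
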